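(* Let $(V_1,\dots,V_n)$ be an $n$-tuple of doubly non-commuting isometries on $H$ and let $1\le l\le n$. If $V_1,\dots,V_l$ are pure isometries and $\dim\big(\bigcap_{i=1}^l\ker V_i^*\big)<\infty$, then $V_{l+1},\dots,V_n$ are unitary operators on $H$.
   Context: Fix $n\ge1$ and $z_{ij}\in\mathbb T$ ($i\ne j$) with $z_{ji}=\overline{z_{ij}}$; $(V_1,\dots,V_n)$ is doubly non-commuting if the $V_i$ are isometries with $V_i^*V_j=\overline{z_{ij}}V_jV_i^*$ for $i\ne j$. An isometry $S$ on $H$ is a pure isometry if $\{0\}$ is the only $S$-invariant subspace of $H$ on which $S$ is unitary. *)

theory Defs
  imports "HOL-Analysis.Analysis"
begin

text \<open>Complex Hilbert spaces: a real Banach space with a complex scalar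
multiplication and a complex inner product (linear in the first argument)
inducing the norm.\<close>

class chilbert = real_normed_vector + complete_space +
  fixes cscale :: "complex \<Rightarrow> 'a \<Rightarrow> 'a"
    and cinner :: "'a \<Rightarrow> 'a \<Rightarrow> complex"
  assumes cscale_of_real: "cscale (complex_of_real r) x = scaleR r x"
    and cscale_add_right: "cscale c (x + y) = cscale c x + cscale c y"
    and cscale_add_left: "cscale (a + b) x = cscale a x + cscale b x"
    and cscale_cscale: "cscale a (cscale b x) = cscale (a * b) x"
    and cscale_one: "cscale 1 x = x"
    and cinner_add_left: "cinner (x + y) z = cinner x z + cinner y z"
    and cinner_cscale_left: "cinner (cscale c x) y = c * cinner x y"
    and cinner_commute: "cinner y x = cnj (cinner x y)"
    and cinner_self: "cinner x x = complex_of_real ((norm x)\<^sup>2)"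

definition bounded_clop :: "('a::chilbert \<Rightarrow> 'a) \<Rightarrow> bool" where
  "bounded_clop T \<longleftrightarrow> (\<forall>x y. T (x + y) = T x + T y) \<and>
     (\<forall>c x. T (cscale c x) = cscale c (T x)) \<and> (\<exists>K. \<forall>x. norm (T x) \<le> K * norm x)"

definition adj :: "('a::chilbert \<Rightarrow> 'a) \<Rightarrow> 'a \<Rightarrow> 'a" where
  "adj T = (SOME S. bounded_clop S \<and> (\<forall>x y. cinner (T x) y = cinner x (S y)))"

definition isometry :: "('a::chilbert \<Rightarrow> 'a) \<Rightarrow> bool" where
  "isometry V \<longleftrightarrow> bounded_clop V \<and> adj V \<circ> V = id"

definition unitary :: "('a::chilbert \<Rightarrow> 'a) \<Rightarrow> bool" where
  "unitary U \<longleftrightarrow> bounded_clop U \<and> adj U \<circ> U = id \<and> U \<circ> adj U = id"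

definition csubspace :: "'a::chilbert set \<Rightarrow> bool" where
  "csubspace M \<longleftrightarrow> 0 \<in> M \<and> (\<forall>x\<in>M. \<forall>y\<in>M. x + y \<in> M) \<and> (\<forall>c. \<forall>x\<in>M. cscale c x \<in> M)"

definition closed_csubspace :: "'a::chilbert set \<Rightarrow> bool" where
  "closed_csubspace M \<longleftrightarrow> csubspace M \<and> closed M"

text \<open>Pure isometry: the only invariant (closed) subspace on which S is unitary
  (i.e. S maps it onto itself) is the zero subspace.\<close>
definition pure_isometry :: "('a::chilbert \<Rightarrow> 'a) \<Rightarrow> bool" where
  "pure_isometry S \<longleftrightarrow> isometry S \<and>
     (\<forall>M. closed_csubspace M \<and> S ` M = M \<longrightarrow> M = {0})"

definition cspan :: "'a::chilbert set \<Rightarrow> 'a set" where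
  "cspan B = {y. \<exists>F c. finite F \<and> F \<subseteq> B \<and> y = (\<Sum>b\<in>F. cscale (c b) b)}"

definition finite_cdim :: "'a::chilbert set \<Rightarrow> bool" where
  "finite_cdim M \<longleftrightarrow> (\<exists>B. finite B \<and> cspan B = M)"

definition doubly_noncommuting ::
    "nat \<Rightarrow> (nat \<Rightarrow> nat \<Rightarrow> complex) \<Rightarrow> (nat \<Rightarrow> 'a::chilbert \<Rightarrow> 'a) \<Rightarrow> bool" where
  "doubly_noncommuting n z V \<longleftrightarrow>
     (\<forall>i\<in>{1..n}. isometry (V i)) \<and>
     (\<forall>i\<in>{1..n}. \<forall>j\<in>{1..n}. i \<noteq> j \<longrightarrow>
        norm (z i j) = 1 \<and> z j i = cnj (z i j) \<and>
        adj (V i) \<circ> V j = (\<lambda>x. cscale (cnj (z i j)) (V j (adj (V i) x))))"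

end

theory Submission
  imports Defs
begin


interpretation cvs: vector_space "cscale :: complex \<Rightarrow> 'a::chilbert \<Rightarrow> 'a"
  by unfold_locales (auto simp: cscale_add_right cscale_add_left cscale_cscale cscale_one)

context begin

lemma cinner_zero_left[simp]: "cinner 0 y = 0"
  using cinner_add_left[of 0 0 y] by simp

lemma cinner_minus_left: "cinner (- x) y = - cinner x y"
  using cinner_add_left[of x "-x" y] by (simp add: add_eq_0_iff)

lemma cinner_diff_left: "cinner (x - y) z = cinner x z - cinner y z"
  using cinner_add_left[of x "-y" z] by (simp add: cinner_minus_left)

lemma cinner_add_right: "cinner x (y + z) = cinner x y + cinner x z"
  by (metis cinner_add_left cinner_commute complex_cnj_add)

lemma cinner_diff_right: "cinner x (y - z) = cinner x y - cinner x z"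
  by (metis cinner_diff_left cinner_commute complex_cnj_diff)

lemma cinner_zero_right[simp]: "cinner x 0 = 0"
  by (metis cinner_commute cinner_zero_left complex_cnj_zero)

lemma cinner_cscale_right: "cinner x (cscale c y) = cnj c * cinner x y"
  by (metis cinner_commute cinner_cscale_left complex_cnj_mult complex_cnj_cnj)

lemma cinner_self_eq_0: "cinner x x = 0 \<longleftrightarrow> x = 0"
  by (simp add: cinner_self)

lemma cinner_ext: "(\<And>x. cinner x y = cinner x w) \<Longrightarrow> y = w"
  by (metis cinner_diff_right cinner_self_eq_0 right_minus_eq)

lemma norm_sq_add: "(norm (x + y))\<^sup>2 = (norm x)\<^sup>2 + (norm y)\<^sup>2 + 2 * Re (cinner x y)"
proof -
  have h: "cinner (x+y) (x+y) = cinner x x + cinner x y + cnj (cinner x y) + cinner y y"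
    by (simp add: cinner_add_left cinner_add_right cinner_commute[of x y])
  have "(norm (x+y))\<^sup>2 = Re (cinner (x+y) (x+y))" by (simp only: cinner_self Re_complex_of_real)
  also have "\<dots> = Re (cinner x x) + Re (cinner y y) + 2 * Re (cinner x y)" by (simp add: h)
  also have "Re (cinner x x) = (norm x)\<^sup>2" by (simp only: cinner_self Re_complex_of_real)
  also have "Re (cinner y y) = (norm y)\<^sup>2" by (simp only: cinner_self Re_complex_of_real)
  finally show ?thesis .
qed

lemma norm_cscale: "norm (cscale c x) = cmod c * norm x"
proof -
  have "(norm (cscale c x))\<^sup>2 = Re (cinner (cscale c x) (cscale c x))"
    by (simp only: cinner_self Re_complex_of_real)
  also have "\<dots> = Re (c * cnj c * cinner x x)"
    by (simp only: cinner_cscale_left cinner_cscale_right mult.assoc mult.left_commute)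
  also have "c * cnj c = complex_of_real ((cmod c)\<^sup>2)" by (simp only: complex_norm_square)
  also have "Re (complex_of_real ((cmod c)\<^sup>2) * cinner x x) = (cmod c)\<^sup>2 * Re (cinner x x)"
    by simp
  also have "Re (cinner x x) = (norm x)\<^sup>2" by (simp only: cinner_self Re_complex_of_real)
  finally have "(norm (cscale c x))\<^sup>2 = (cmod c * norm x)\<^sup>2" by (simp add: power_mult_distrib)
  then show ?thesis by (simp add: power2_eq_iff_nonneg)
qed

lemma proj_identity:
  assumes "y \<noteq> 0"
  shows "(norm (x - cscale (cinner x y / complex_of_real ((norm y)\<^sup>2)) y))\<^sup>2
       = (norm x)\<^sup>2 - (cmod (cinner x y))\<^sup>2 / (norm y)\<^sup>2"
proof -
  define a where "a = cinner x y"
  define t where "t = a / complex_of_real ((norm y)\<^sup>2)"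
  have ny: "norm y > 0" using assms by simp
  have e: "x - cscale t y = x + cscale (-t) y"
    by (metis add_uminus_conv_diff cvs.scale_minus_left)
  have "(norm (x + cscale (-t) y))\<^sup>2 = (norm x)\<^sup>2 + (cmod t * norm y)\<^sup>2 + 2 * Re (cnj (-t) * a)"
    by (simp only: norm_sq_add norm_cscale cinner_cscale_right a_def norm_minus_cancel)
  also have "cmod t = cmod a / (norm y)\<^sup>2" by (simp add: t_def norm_divide norm_power)
  also have "cnj (-t) * a = - complex_of_real ((cmod a)\<^sup>2 / (norm y)\<^sup>2)"
    by (simp add: t_def complex_norm_square[symmetric] mult.commute)
  finally have "(norm (x - cscale t y))\<^sup>2 = (norm x)\<^sup>2 + (cmod a / (norm y)\<^sup>2 * norm y)\<^sup>2
     + 2 * Re (- complex_of_real ((cmod a)\<^sup>2 / (norm y)\<^sup>2))" by (simp only: e)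
  then show ?thesis using ny
    by (simp add: a_def t_def power_divide power2_eq_square field_simps)
qed

lemma cauchy_schwarz: "cmod (cinner x y) \<le> norm x * norm y"
proof (cases "y = 0")
  case False
  have "0 \<le> (norm x)\<^sup>2 - (cmod (cinner x y))\<^sup>2 / (norm y)\<^sup>2"
    using proj_identity[OF False, of x] by (metis zero_le_power2)
  then have "(cmod (cinner x y))\<^sup>2 \<le> (norm x * norm y)\<^sup>2"
    using False by (simp add: field_simps power_mult_distrib)
  then show ?thesis by (simp add: power2_le_iff_abs_le)
qed simp

end


lemma scaleR_cscale: "scaleR r (x::'a::chilbert) = cscale (complex_of_real r) x"
  by (simp add: cscale_of_real)

lemma csubspace_scaleR: "csubspace N \<Longrightarrow> x \<in> N \<Longrightarrow> scaleR r x \<in> N"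
  unfolding csubspace_def scaleR_cscale by blast

lemma csubspace_diff: "csubspace N \<Longrightarrow> x \<in> N \<Longrightarrow> y \<in> N \<Longrightarrow> x - y \<in> N"
  unfolding csubspace_def
  by (metis add_uminus_conv_diff cscale_one cvs.scale_minus_left)

lemma cinner_minus_right: "cinner x (- y) = - cinner x y"
  using cinner_diff_right[of x 0 y] by simp

lemma parallelogram:
  fixes a b :: "'a::chilbert"
  shows   "(norm (a - b))\<^sup>2 + (norm (a + b))\<^sup>2 = 2 * (norm a)\<^sup>2 + 2 * (norm b)\<^sup>2"
  using norm_sq_add[of a b] norm_sq_add[of a "-b"]
  by (simp add: cinner_minus_right)

lemma bounded_clop_linear: "bounded_clop T \<Longrightarrow> bounded_linear T"
  unfolding bounded_clop_def
proof (elim conjE exE)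
  fix K assume a: "\<forall>x y. T (x + y) = T x + T y" "\<forall>c x. T (cscale c x) = cscale c (T x)"
    "\<forall>x. norm (T x) \<le> K * norm x"
  show "bounded_linear T"
    by (rule bounded_linear_intro[where K=K]) (use a in \<open>auto simp: scaleR_cscale mult.commute\<close>)
qed

lemma closed_kernel: "bounded_clop T \<Longrightarrow> closed {x. T x = 0}"
proof -
  assume "bounded_clop T"
  then have "bounded_linear T" by (rule bounded_clop_linear)
  then have "\<And>x. isCont T x" by (simp add: linear_continuous_at)
  then have "closed (T -` {0})" by (intro continuous_closed_vimage) auto
  then show ?thesis by (simp add: vimage_def)
qed

lemma proj_exists:
  assumes N: "closed_csubspace N"
  shows "\<exists>m\<in>N. \<forall>n\<in>N. cinner (x - m) n = 0"
proof -
  have sub: "csubspace N" and cl: "closed N" using N by (auto simp: closed_csubspace_def)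
  have zN: "0 \<in> N" using sub by (simp add: csubspace_def)
  define S where "S = (\<lambda>m. norm (x - m)) ` N"
  define d where "d = Inf S"
  have Sne: "S \<noteq> {}" using zN by (auto simp: S_def)
  have Sbdd: "bdd_below S" by (auto simp: S_def bdd_below_def intro!: exI[of _ 0])
  have d_le: "\<And>m. m \<in> N \<Longrightarrow> d \<le> norm (x - m)"
    unfolding d_def S_def by (rule cInf_lower) (use Sbdd in \<open>auto simp: S_def\<close>)
  have d0: "0 \<le> d" unfolding d_def using Sne by (intro cInf_greatest) (auto simp: S_def)
  have ex: "\<exists>m\<in>N. (norm (x - m))\<^sup>2 < d\<^sup>2 + inverse (real (Suc k))" for k
  proof -
    have "d < sqrt (d\<^sup>2 + inverse (real (Suc k)))"
      by (intro real_less_rsqrt) simp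
    then have "Inf S < sqrt (d\<^sup>2 + inverse (real (Suc k)))" by (simp add: d_def)
    then obtain s where "s \<in> S" "s < sqrt (d\<^sup>2 + inverse (real (Suc k)))"
      using cInf_less_iff[OF Sne Sbdd] by blast
    then obtain m where m: "m \<in> N" "norm (x - m) < sqrt (d\<^sup>2 + inverse (real (Suc k)))"
      by (auto simp: S_def)
    then have "(norm (x - m))\<^sup>2 < d\<^sup>2 + inverse (real (Suc k))"
      by (metis norm_ge_zero real_sqrt_less_iff real_sqrt_pow2_iff real_sqrt_power)
    then show ?thesis using m by blast
  qed
  then obtain s where sN: "\<And>k. s k \<in> N"
    and sb: "\<And>k. (norm (x - s k))\<^sup>2 < d\<^sup>2 + inverse (real (Suc k))"
    by metis
  have bound: "(norm (s k - s l))\<^sup>2 \<le> 2 * inverse (real (Suc k)) + 2 * inverse (real (Suc l))" for k l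
  proof -
    define mid where "mid = scaleR (1/2) (s k + s l)"
    have midN: "mid \<in> N" unfolding mid_def
      using sub sN by (intro csubspace_scaleR) (auto simp: csubspace_def)
    have e1: "(x - s k) - (x - s l) = s l - s k" by simp
    have e2: "(x - s k) + (x - s l) = scaleR 2 (x - mid)"
      by (simp add: mid_def algebra_simps scaleR_2)
    have "2 * d \<le> norm ((x - s k) + (x - s l))"
      using d_le[OF midN] by (simp add: e2)
    then have "(2 * d)\<^sup>2 \<le> (norm ((x - s k) + (x - s l)))\<^sup>2"
      using d0 by (intro power_mono) auto
    then have "4 * d\<^sup>2 \<le> (norm ((x - s k) + (x - s l)))\<^sup>2"
      by (simp add: power_mult_distrib)
    moreover have "(norm (s l - s k))\<^sup>2 + (norm ((x - s k) + (x - s l)))\<^sup>2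
        = 2 * (norm (x - s k))\<^sup>2 + 2 * (norm (x - s l))\<^sup>2"
      using parallelogram[of "x - s k" "x - s l"] by (simp only: e1)
    moreover have "(norm (s k - s l))\<^sup>2 = (norm (s l - s k))\<^sup>2" by (simp add: norm_minus_commute)
    ultimately show ?thesis using sb[of k] sb[of l] by linarith
  qed
  have "Cauchy s"
  proof (rule metric_CauchyI)
    fix e :: real assume e: "0 < e"
    obtain M :: nat where M: "4 / e\<^sup>2 < real M" using reals_Archimedean2 by blast
    have Mp: "4 * inverse (real (Suc M)) < e\<^sup>2"
      using M e by (simp add: field_simps) (smt (verit) zero_less_power)
    show "\<exists>M. \<forall>m\<ge>M. \<forall>n\<ge>M. dist (s m) (s n) < e"
    proof (intro exI allI impI)
      fix m n assume mn: "M \<le> m" "M \<le> n"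
      have "inverse (real (Suc m)) \<le> inverse (real (Suc M))"
        using mn by (simp add: le_imp_inverse_le)
      moreover have "inverse (real (Suc n)) \<le> inverse (real (Suc M))"
        using mn by (simp add: le_imp_inverse_le)
      moreover have "(dist (s m) (s n))\<^sup>2 = (norm (s m - s n))\<^sup>2" by (simp add: dist_norm)
      ultimately have "(dist (s m) (s n))\<^sup>2 < e\<^sup>2"
        using bound[of m n] Mp by linarith
      then show "dist (s m) (s n) < e" using e by (simp add: power_less_imp_less_base)
    qed
  qed
  then obtain m where lim: "s \<longlonglongrightarrow> m" using Cauchy_convergent convergent_def by blast
  have mN: "m \<in> N" using closed_sequentially[OF cl] sN lim by blast
  have "(\<lambda>k. (norm (x - s k))\<^sup>2) \<longlonglongrightarrow> (norm (x - m))\<^sup>2"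
    by (intro tendsto_intros lim)
  moreover have "(\<lambda>k. d\<^sup>2 + inverse (real (Suc k))) \<longlonglongrightarrow> d\<^sup>2 + 0"
    by (intro tendsto_intros LIMSEQ_inverse_real_of_nat)
  ultimately have "(norm (x - m))\<^sup>2 \<le> d\<^sup>2 + 0"
    by (rule LIMSEQ_le) (use sb less_imp_le in blast)
  then have um: "norm (x - m) \<le> d" using d0 by (simp add: power2_le_iff_abs_le)
  show ?thesis
  proof (intro bexI[OF _ mN] ballI)
    fix n assume nN: "n \<in> N"
    show "cinner (x - m) n = 0"
    proof (cases "n = 0")
      case False
      define u where "u = x - m"
      define t where "t = cinner u n / complex_of_real ((norm n)\<^sup>2)"
      have "m + cscale t n \<in> N" using sub mN nN by (auto simp: csubspace_def)
      then have "d \<le> norm (x - (m + cscale t n))" by (rule d_le)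
      also have "x - (m + cscale t n) = u - cscale t n" by (simp add: u_def)
      finally have "norm u \<le> norm (u - cscale t n)" using um u_def by simp
      then have "(norm u)\<^sup>2 \<le> (norm (u - cscale t n))\<^sup>2" by (simp add: power_mono)
      also have "\<dots> = (norm u)\<^sup>2 - (cmod (cinner u n))\<^sup>2 / (norm n)\<^sup>2"
        unfolding t_def by (rule proj_identity[OF False])
      finally have "(cmod (cinner u n))\<^sup>2 / (norm n)\<^sup>2 \<le> 0" by simp
      then have "(cmod (cinner u n))\<^sup>2 \<le> 0" using False
        by (simp add: divide_le_0_iff)
      then show ?thesis unfolding u_def by simp
    qed simp
  qed
qed



lemma riesz:
  fixes f :: "'a::chilbert \<Rightarrow> complex"
  assumes add: "\<And>x y. f (x + y) = f x + f y"
    and sc: "\<And>c x. f (cscale c x) = c * f x"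
    and bd: "\<And>x. cmod (f x) \<le> K * norm x"
  shows "\<exists>w. \<forall>x. f x = cinner x w"
proof (cases "\<forall>x. f x = 0")
  case True then show ?thesis by (intro exI[of _ 0]) simp
next
  case False
  then obtain x0 where fx0: "f x0 \<noteq> 0" by blast
  have f0: "f 0 = 0" using add[of 0 0] by simp
  have fminus: "f (x - y) = f x - f y" for x y
    using add[of "x - y" y] by simp
  have bl: "bounded_linear f"
    by (rule bounded_linear_intro[where K=K])
       (use add sc bd in \<open>auto simp: scaleR_cscale scaleR_conv_of_real mult.commute\<close>)
  then have "\<And>x. isCont f x" by (simp add: linear_continuous_at)
  then have "closed (f -` {0})" by (intro continuous_closed_vimage) auto
  moreover have "csubspace (f -` {0})"
    unfolding csubspace_def using f0 add sc by auto
  ultimately have "closed_csubspace (f -` {0})" by (simp add: closed_csubspace_def)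
  from proj_exists[OF this, of x0] obtain m where m: "f m = 0"
    and orth: "\<And>n. f n = 0 \<Longrightarrow> cinner (x0 - m) n = 0" by auto
  define u where "u = x0 - m"
  have fu: "f u \<noteq> 0" using fx0 m by (simp add: u_def fminus)
  then have u0: "u \<noteq> 0" using f0 by auto
  have key: "cinner x u = f x / f u * cinner u u" for x
  proof -
    define v where "v = x - cscale (f x / f u) u"
    have "f v = 0" using fu by (simp add: v_def fminus sc)
    then have "cinner u v = 0" using orth u_def by simp
    then have "cinner v u = 0" by (metis cinner_commute complex_cnj_zero)
    then show ?thesis by (simp add: v_def cinner_diff_left cinner_cscale_left)
  qed
  show ?thesis
  proof (intro exI allI)
    fix x
    have cu: "cinner u u \<noteq> 0" using u0 cinner_self_eq_0 by blast
    have r: "cnj (cinner u u) = cinner u u" by (metis cinner_commute)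
    have "cinner x (cscale (cnj (f u) / cinner u u) u) = f u / cinner u u * cinner x u"
      by (simp add: cinner_cscale_right r)
    also have "\<dots> = f x" unfolding key[of x] using cu fu by simp
    finally show "f x = cinner x (cscale (cnj (f u) / cinner u u) u)" by simp
  qed
qed

lemma adjoint_exists:
  assumes T: "bounded_clop T"
  shows "\<exists>S. bounded_clop S \<and> (\<forall>x y. cinner (T x) y = cinner x (S y))"
proof -
  from T obtain K where tadd: "\<And>x y. T (x + y) = T x + T y"
    and tsc: "\<And>c x. T (cscale c x) = cscale c (T x)" and tb: "\<And>x. norm (T x) \<le> K * norm x"
    unfolding bounded_clop_def by blast
  have tb': "norm (T x) \<le> \<bar>K\<bar> * norm x" for x
    using tb[of x] abs_ge_self[of K] norm_ge_zero[of x] by (meson mult_right_mono order_trans)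
  have ex: "\<exists>w. \<forall>x. cinner (T x) y = cinner x w" for y
  proof (rule riesz[where K="\<bar>K\<bar> * norm y" and f="\<lambda>x. cinner (T x) y"])
    fix x1 x2 show "cinner (T (x1 + x2)) y = cinner (T x1) y + cinner (T x2) y"
      by (simp only: tadd cinner_add_left)
  next
    fix c x show "cinner (T (cscale c x)) y = c * cinner (T x) y"
      by (simp only: tsc cinner_cscale_left)
  next
    fix x
    have "cmod (cinner (T x) y) \<le> norm (T x) * norm y" by (rule cauchy_schwarz)
    also have "\<dots> \<le> \<bar>K\<bar> * norm x * norm y" by (rule mult_right_mono[OF tb' norm_ge_zero])
    finally show "cmod (cinner (T x) y) \<le> \<bar>K\<bar> * norm y * norm x" by (simp only: mult_ac)
  qed
  define S where "S y = (SOME w. \<forall>x. cinner (T x) y = cinner x w)" for y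
  have S: "cinner (T x) y = cinner x (S y)" for x y
    unfolding S_def using someI_ex[OF ex[of y]] by blast
  have "bounded_clop S"
    unfolding bounded_clop_def
  proof (intro conjI allI exI)
    fix y1 y2 show "S (y1 + y2) = S y1 + S y2"
      by (rule cinner_ext) (simp add: S[symmetric] cinner_add_right)
  next
    fix c y show "S (cscale c y) = cscale c (S y)"
      by (rule cinner_ext) (simp add: S[symmetric] cinner_cscale_right)
  next
    fix y
    have "(norm (S y))\<^sup>2 = Re (cinner (S y) (S y))" by (simp only: cinner_self Re_complex_of_real)
    also have "\<dots> = Re (cinner (T (S y)) y)" by (simp add: S)
    also have "\<dots> \<le> cmod (cinner (T (S y)) y)" by (rule complex_Re_le_cmod)
    also have "\<dots> \<le> norm (T (S y)) * norm y" by (rule cauchy_schwarz)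
    also have "\<dots> \<le> \<bar>K\<bar> * norm (S y) * norm y" by (rule mult_right_mono[OF tb' norm_ge_zero])
    finally have h: "norm (S y) * norm (S y) \<le> (\<bar>K\<bar> * norm y) * norm (S y)"
      by (simp add: power2_eq_square mult_ac)
    show "norm (S y) \<le> \<bar>K\<bar> * norm y"
    proof (cases "norm (S y) = 0")
      case True then show ?thesis by simp
    next
      case False then have "0 < norm (S y)" by simp
      with h show ?thesis by (rule mult_right_le_imp_le)
    qed
  qed
  then show ?thesis using S by blast
qed

lemma adj_prop:
  assumes "bounded_clop T"
  shows "bounded_clop (adj T)" "cinner (T x) y = cinner x (adj T y)"
proof -
  have "bounded_clop (adj T) \<and> (\<forall>x y. cinner (T x) y = cinner x (adj T y))"
    unfolding adj_def using someI_ex[OF adjoint_exists[OF assms]] .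
  then show "bounded_clop (adj T)" "cinner (T x) y = cinner x (adj T y)" by auto
qed

lemma adj_prop2:
  assumes "bounded_clop T"
  shows "cinner x (T y) = cinner (adj T x) y"
  by (metis adj_prop(2)[OF assms] cinner_commute)

lemma bclop_add: "bounded_clop T \<Longrightarrow> T (x + y) = T x + T y"
  by (simp add: bounded_clop_def)
lemma bclop_scale: "bounded_clop T \<Longrightarrow> T (cscale c x) = cscale c (T x)"
  by (simp add: bounded_clop_def)
lemma bclop_zero: "bounded_clop T \<Longrightarrow> T 0 = 0"
  using bclop_add[of T 0 0] by simp
lemma bclop_diff: "bounded_clop T \<Longrightarrow> T (x - y) = T x - T y"
  using bclop_add[of T "x - y" y] by (simp add: eq_diff_eq)



interpretation cvp: vector_space_pair "cscale :: complex \<Rightarrow> 'a::chilbert \<Rightarrow> 'a" "cscale :: complex \<Rightarrow> 'a \<Rightarrow> 'a"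
  by unfold_locales

lemma cspan_eq: "cspan B = cvs.span B"
  unfolding cspan_def cvs.span_explicit by blast

lemma bclop_linear: "bounded_clop T \<Longrightarrow> Vector_Spaces.linear cscale cscale T"
  by (rule Vector_Spaces.linear_iff[THEN iffD2]) (use cvs.vector_space_axioms in \<open>auto simp: bounded_clop_def\<close>)


lemma fd_surj:
  fixes T :: "'a::chilbert \<Rightarrow> 'a"
  assumes fd: "finite_cdim W" and T: "bounded_clop T" and inj: "inj T"
    and inv: "\<forall>w\<in>W. T w \<in> W"
  shows "W \<subseteq> T ` W"
proof -
  obtain B where fin: "finite B" and WB: "W = cvs.span B"
    using fd unfolding finite_cdim_def cspan_eq by blast
  obtain C where CW: "C \<subseteq> W" and indC: "cvs.independent C" and WC: "W \<subseteq> cvs.span C"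
    by (rule cvs.basis_exists[of W])
  have "finite C \<and> card C \<le> card B"
    by (rule cvs.independent_span_bound[OF fin indC CW[unfolded WB]])
  then have finC: "finite C" by simp
  have lin: "Vector_Spaces.linear cscale cscale T" by (rule bclop_linear[OF T])
  have indTC: "cvs.independent (T ` C)"
    by (rule cvp.linear_independent_injective_image[OF lin indC]) (use inj in \<open>blast intro: inj_on_subset\<close>)
  have cardTC: "card (T ` C) = card C" using inj by (simp add: card_image inj_on_subset)
  have TCW: "T ` C \<subseteq> W" using CW inv by auto
  have WTC: "W \<subseteq> cvs.span (T ` C)"
  proof
    fix y assume yW: "y \<in> W"
    show "y \<in> cvs.span (T ` C)"
    proof (rule ccontr)
      assume ny: "y \<notin> cvs.span (T ` C)"
      then have ind2: "cvs.independent (insert y (T ` C))"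
        by (rule cvs.independent_insertI[OF _ indTC])
      have "insert y (T ` C) \<subseteq> W" using yW TCW by simp
      then have sub2: "insert y (T ` C) \<subseteq> cvs.span C" using WC by (rule order_trans)
      have "finite (insert y (T ` C)) \<and> card (insert y (T ` C)) \<le> card C"
        by (rule cvs.independent_span_bound[OF finC ind2 sub2])
      moreover have "y \<notin> T ` C"
      proof
        assume "y \<in> T ` C"
        then have "y \<in> cvs.span (T ` C)" by (rule cvs.span_base)
        with ny show False by simp
      qed
      then have "card (insert y (T ` C)) = Suc (card (T ` C))"
        using finC by simp
      ultimately show False using cardTC by linarith
    qed
  qed
  have "cvs.span C \<subseteq> W" unfolding WB
    by (rule cvs.span_minimal[OF CW[unfolded WB] cvs.subspace_span])
  then have "T ` cvs.span C \<subseteq> T ` W" by blast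
  moreover have "cvs.span (T ` C) = T ` cvs.span C" by (rule cvp.linear_span_image[OF lin])
  ultimately show ?thesis using WTC by blast
qed



lemma iso_bclop: "isometry V \<Longrightarrow> bounded_clop V"
  by (simp add: isometry_def)

lemma iso_left: "isometry V \<Longrightarrow> adj V (V x) = x"
  unfolding isometry_def by (metis comp_apply id_apply)

lemma iso_norm:
  assumes "isometry V" shows "norm (V x) = norm x"
proof -
  have "cinner (V x) (V x) = cinner x x"
    using adj_prop(2)[OF iso_bclop[OF assms]] iso_left[OF assms] by simp
  then have "complex_of_real ((norm (V x))\<^sup>2) = complex_of_real ((norm x)\<^sup>2)"
    by (simp only: cinner_self)
  then have "(norm (V x))\<^sup>2 = (norm x)\<^sup>2" using of_real_eq_iff by blast
  then show ?thesis by (simp add: power2_eq_iff_nonneg)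
qed

lemma commute_lemma:
  assumes Vi: "isometry Vi" and Vj: "isometry Vj" and c: "cmod c = 1"
    and rel: "\<And>x. adj Vi (Vj x) = cscale c (Vj (adj Vi x))"
  shows "Vj (Vi x) = cscale c (Vi (Vj x))"
proof -
  define A where "A = adj Vi"
  have bi: "bounded_clop Vi" using Vi by (rule iso_bclop)
  have bA: "bounded_clop A" unfolding A_def by (rule adj_prop(1)[OF bi])
  define w where "w = Vj (Vi x)"
  have Aw: "A w = cscale c (Vj x)" unfolding w_def A_def rel iso_left[OF Vi] ..
  define p where "p = Vi (A w)"
  have "A (w - p) = 0" unfolding p_def using iso_left[OF Vi] bclop_diff[OF bA]
    by (simp add: A_def)
  then have orth: "cinner p (w - p) = 0"
    unfolding p_def adj_prop(2)[OF bi] A_def by simp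
  have e: "(norm w)\<^sup>2 = (norm p)\<^sup>2 + (norm (w - p))\<^sup>2"
    using norm_sq_add[of p "w - p"] orth by simp
  have "norm p = norm x"
    unfolding p_def iso_norm[OF Vi] Aw norm_cscale c iso_norm[OF Vj] by simp
  moreover have "norm w = norm x" unfolding w_def iso_norm[OF Vi] iso_norm[OF Vj] ..
  ultimately have "(norm (w - p))\<^sup>2 = 0" using e by simp
  then have "w = p" by simp
  also have "p = cscale c (Vi (Vj x))" unfolding p_def Aw bclop_scale[OF bi] ..
  finally show ?thesis unfolding w_def .
qed

lemma adj_commute:
  assumes bi: "bounded_clop Vi" and bj: "bounded_clop Vj"
    and com: "\<And>x. Vj (Vi x) = cscale c (Vi (Vj x))"
  shows "adj Vi (adj Vj y) = cscale (cnj c) (adj Vj (adj Vi y))"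
proof (rule cinner_ext)
  fix x
  have "cinner x (adj Vi (adj Vj y)) = cinner (Vi x) (adj Vj y)" by (simp add: adj_prop(2)[OF bi])
  also have "\<dots> = cinner (Vj (Vi x)) y" by (simp add: adj_prop(2)[OF bj])
  also have "\<dots> = c * cinner (Vi (Vj x)) y" by (simp add: com cinner_cscale_left)
  also have "\<dots> = c * cinner x (adj Vj (adj Vi y))"
    by (simp add: adj_prop(2)[OF bi] adj_prop(2)[OF bj])
  also have "\<dots> = cinner x (cscale (cnj c) (adj Vj (adj Vi y)))" by (simp add: cinner_cscale_right)
  finally show "cinner x (adj Vi (adj Vj y)) = cinner x (cscale (cnj c) (adj Vj (adj Vi y)))" .
qed

lemma kernel_ccs: "bounded_clop A \<Longrightarrow> closed_csubspace {x. A x = 0}"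
  unfolding closed_csubspace_def csubspace_def
  using closed_kernel[of A] bclop_zero[of A] bclop_add[of A] bclop_scale[of A]
  by auto

lemma ccs_Int: "closed_csubspace D \<Longrightarrow> closed_csubspace E \<Longrightarrow> closed_csubspace (D \<inter> E)"
  unfolding closed_csubspace_def csubspace_def by auto

lemma pure_kernel:
  assumes P: "pure_isometry V" and D: "closed_csubspace D" and D0: "D \<noteq> {0}"
    and inv1: "\<forall>x\<in>D. V x \<in> D" and inv2: "\<forall>x\<in>D. adj V x \<in> D"
  shows "\<exists>x\<in>D. x \<noteq> 0 \<and> adj V x = 0"
proof (rule ccontr)
  assume no: "\<not> ?thesis"
  have iso: "isometry V" using P by (simp add: pure_isometry_def)
  have bA: "bounded_clop (adj V)" by (rule adj_prop(1)[OF iso_bclop[OF iso]])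
  have sub: "csubspace D" using D by (simp add: closed_csubspace_def)
  have "V ` D = D"
  proof
    show "V ` D \<subseteq> D" using inv1 by blast
  next
    show "D \<subseteq> V ` D"
    proof
      fix x assume xD: "x \<in> D"
      define y where "y = x - V (adj V x)"
      have yD: "y \<in> D" unfolding y_def using sub xD inv1 inv2 by (blast intro: csubspace_diff)
      have "adj V y = 0" unfolding y_def bclop_diff[OF bA] iso_left[OF iso] by simp
      then have "y = 0" using no yD by blast
      then have "x = V (adj V x)" unfolding y_def by simp
      then show "x \<in> V ` D" using inv2 xD by blast
    qed
  qed
  then have "D = {0}" using P D by (simp add: pure_isometry_def)
  with D0 show False by simp
qed

lemma kernels_nonzero:
  fixes V :: "nat \<Rightarrow> 'a::chilbert \<Rightarrow> 'a"
  assumes "finite I"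
  shows "(\<forall>i\<in>I. pure_isometry (V i)) \<Longrightarrow>
    (\<forall>i\<in>I. \<forall>k\<in>I. i \<noteq> k \<longrightarrow> (\<forall>x. adj (V k) x = 0 \<longrightarrow>
        adj (V k) (V i x) = 0 \<and> adj (V k) (adj (V i) x) = 0)) \<Longrightarrow>
    closed_csubspace D \<Longrightarrow> D \<noteq> {0} \<Longrightarrow>
    (\<forall>i\<in>I. \<forall>x\<in>D. V i x \<in> D \<and> adj (V i) x \<in> D) \<Longrightarrow>
    \<exists>x\<in>D. x \<noteq> 0 \<and> (\<forall>i\<in>I. adj (V i) x = 0)"
  using assms
proof (induction I arbitrary: D rule: finite_induct)
  case empty
  have "0 \<in> D" using empty.prems(3) by (simp add: closed_csubspace_def csubspace_def)
  with empty.prems(4) obtain x where "x \<in> D" "x \<noteq> 0" by blast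
  then show ?case by blast
next
  case (insert a J)
  have Pa: "pure_isometry (V a)" using insert.prems(1) by simp
  have bA: "bounded_clop (adj (V a))"
    using Pa by (simp add: pure_isometry_def isometry_def adj_prop(1))
  define D' where "D' = D \<inter> {x. adj (V a) x = 0}"
  have D': "closed_csubspace D'" unfolding D'_def
    by (rule ccs_Int[OF insert.prems(3) kernel_ccs[OF bA]])
  have "\<exists>x\<in>D. x \<noteq> 0 \<and> adj (V a) x = 0"
    by (rule pure_kernel[OF Pa insert.prems(3) insert.prems(4)]) (use insert.prems(5) in auto)
  then have D'0: "D' \<noteq> {0}" unfolding D'_def by blast
  have inv: "\<forall>i\<in>J. \<forall>x\<in>D'. V i x \<in> D' \<and> adj (V i) x \<in> D'"
  proof (intro ballI)
    fix i x assume i: "i \<in> J" and x: "x \<in> D'"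
    have ia: "i \<noteq> a" using i insert.hyps(2) by blast
    have "adj (V a) (V i x) = 0 \<and> adj (V a) (adj (V i) x) = 0"
      using insert.prems(2) i ia x unfolding D'_def by auto
    moreover have "V i x \<in> D \<and> adj (V i) x \<in> D" using insert.prems(5) i x unfolding D'_def by auto
    ultimately show "V i x \<in> D' \<and> adj (V i) x \<in> D'" unfolding D'_def by auto
  qed
  have "\<exists>x\<in>D'. x \<noteq> 0 \<and> (\<forall>i\<in>J. adj (V i) x = 0)"
    by (rule insert.IH[OF _ _ D' D'0 inv]) (use insert.prems(1,2) in auto)
  then show ?case unfolding D'_def by auto
qed



theorem corollary3p12:
  fixes V :: "nat \<Rightarrow> 'a::chilbert \<Rightarrow> 'a" and z :: "nat \<Rightarrow> nat \<Rightarrow> complex"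
    and n l :: nat
  assumes "n \<ge> 1" and "1 \<le> l" and "l \<le> n"
    and "doubly_noncommuting n z V"
    and "\<forall>i\<in>{1..l}. pure_isometry (V i)"
    and "finite_cdim (\<Inter>i\<in>{1..l}. {x. adj (V i) x = 0})"
  shows "\<forall>i\<in>{l+1..n}. unitary (V i)"
proof
  fix j assume j: "j \<in> {l+1..n}"
  have dn1: "\<forall>i\<in>{1..n}. isometry (V i)" and dn2: "\<forall>i\<in>{1..n}. \<forall>j\<in>{1..n}. i \<noteq> j \<longrightarrow>
        norm (z i j) = 1 \<and> z j i = cnj (z i j) \<and>
        adj (V i) \<circ> V j = (\<lambda>x. cscale (cnj (z i j)) (V j (adj (V i) x)))"
    using assms(4) unfolding doubly_noncommuting_def by blast+
  have iso: "\<And>i. i \<in> {1..n} \<Longrightarrow> isometry (V i)" using dn1 by blast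
  have bV: "\<And>i. i \<in> {1..n} \<Longrightarrow> bounded_clop (V i)" using iso iso_bclop by blast
  have bA: "\<And>i. i \<in> {1..n} \<Longrightarrow> bounded_clop (adj (V i))" using bV adj_prop(1) by blast
  have zc: "\<And>i k. i \<in> {1..n} \<Longrightarrow> k \<in> {1..n} \<Longrightarrow> i \<noteq> k \<Longrightarrow> cmod (z i k) = 1"
    using dn2 by blast
  have rel: "\<And>i k x. i \<in> {1..n} \<Longrightarrow> k \<in> {1..n} \<Longrightarrow> i \<noteq> k \<Longrightarrow>
      adj (V i) (V k x) = cscale (cnj (z i k)) (V k (adj (V i) x))"
  proof -
    fix i k x assume h: "i \<in> {1..n}" "k \<in> {1..n}" "i \<noteq> k"
    then have "adj (V i) \<circ> V k = (\<lambda>x. cscale (cnj (z i k)) (V k (adj (V i) x)))"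
      using dn2 by blast
    then show "adj (V i) (V k x) = cscale (cnj (z i k)) (V k (adj (V i) x))"
      by (metis comp_apply)
  qed
  have com: "\<And>i k x. i \<in> {1..n} \<Longrightarrow> k \<in> {1..n} \<Longrightarrow> i \<noteq> k \<Longrightarrow>
      V k (V i x) = cscale (cnj (z i k)) (V i (V k x))"
  proof -
    fix i k x assume h: "i \<in> {1..n}" "k \<in> {1..n}" "i \<noteq> k"
    show "V k (V i x) = cscale (cnj (z i k)) (V i (V k x))"
      by (rule commute_lemma[OF iso[OF h(1)] iso[OF h(2)]]) (use zc[OF h] rel[OF h] in auto)
  qed
  have acom: "\<And>i k y. i \<in> {1..n} \<Longrightarrow> k \<in> {1..n} \<Longrightarrow> i \<noteq> k \<Longrightarrow>
      adj (V i) (adj (V k) y) = cscale (cnj (cnj (z i k))) (adj (V k) (adj (V i) y))"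
  proof -
    fix i k y assume h: "i \<in> {1..n}" "k \<in> {1..n}" "i \<noteq> k"
    show "adj (V i) (adj (V k) y) = cscale (cnj (cnj (z i k))) (adj (V k) (adj (V i) y))"
      by (rule adj_commute[OF bV[OF h(1)] bV[OF h(2)] com[OF h]])
  qed
  have pres: "\<And>i k x. i \<in> {1..n} \<Longrightarrow> k \<in> {1..n} \<Longrightarrow> i \<noteq> k \<Longrightarrow> adj (V k) x = 0 \<Longrightarrow>
      adj (V k) (V i x) = 0 \<and> adj (V k) (adj (V i) x) = 0"
  proof -
    fix i k x assume h: "i \<in> {1..n}" "k \<in> {1..n}" "i \<noteq> k" "adj (V k) x = 0"
    have "adj (V k) (V i x) = cscale (cnj (z k i)) (V i (adj (V k) x))" using rel[OF h(2) h(1)] h(3) by simp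
    also have "\<dots> = 0" using h bclop_zero[OF bV[OF h(1)]] by simp
    finally have 1: "adj (V k) (V i x) = 0" .
    have "adj (V k) (adj (V i) x) = cscale (cnj (cnj (z k i))) (adj (V i) (adj (V k) x))"
      using acom[OF h(2) h(1)] h(3) by simp
    also have "\<dots> = 0" using h bclop_zero[OF bA[OF h(1)]] by simp
    finally show "adj (V k) (V i x) = 0 \<and> adj (V k) (adj (V i) x) = 0" using 1 by simp
  qed
  have jn: "j \<in> {1..n}" and jl: "l < j" using j assms(2) by auto
  define A where "A = adj (V j)"
  define D where "D = {x. A x = 0}"
  define W where "W = (\<Inter>i\<in>{1..l}. {x. adj (V i) x = 0})"
  have AV: "\<And>x. A (V j x) = x" unfolding A_def using iso_left[OF iso[OF jn]] .
  have D0: "D = {0}"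
  proof (rule ccontr)
    assume Dn: "D \<noteq> {0}"
    have Dc: "closed_csubspace D" unfolding D_def A_def by (rule kernel_ccs[OF bA[OF jn]])
    have "\<exists>x\<in>D. x \<noteq> 0 \<and> (\<forall>i\<in>{1..l}. adj (V i) x = 0)"
    proof (rule kernels_nonzero[OF finite_atLeastAtMost assms(5) _ Dc Dn])
      show "\<forall>i\<in>{1..l}. \<forall>k\<in>{1..l}. i \<noteq> k \<longrightarrow> (\<forall>x. adj (V k) x = 0 \<longrightarrow>
          adj (V k) (V i x) = 0 \<and> adj (V k) (adj (V i) x) = 0)"
        using pres assms(3) by auto
      show "\<forall>i\<in>{1..l}. \<forall>x\<in>D. V i x \<in> D \<and> adj (V i) x \<in> D"
        unfolding D_def A_def using pres jn jl assms(3) by auto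
    qed
    then obtain x where xD: "x \<in> D" and x0: "x \<noteq> 0" and xW: "x \<in> W" unfolding W_def by blast
    have "W \<subseteq> V j ` W"
    proof (rule fd_surj)
      show "finite_cdim W" unfolding W_def by (rule assms(6))
      show "bounded_clop (V j)" by (rule bV[OF jn])
      show "inj (V j)" by (metis AV injI)
      show "\<forall>w\<in>W. V j w \<in> W" unfolding W_def using pres jn jl assms(3) by auto
    qed
    then obtain w where "w \<in> W" "x = V j w" using xW by blast
    then have "w = 0" using xD AV unfolding D_def by simp
    then have "x = 0" using \<open>x = V j w\<close> bclop_zero[OF bV[OF jn]] by simp
    with x0 show False by simp
  qed
  have "V j \<circ> adj (V j) = id"
  proof
    fix y
    have "A (y - V j (A y)) = 0" using bclop_diff[OF bA[OF jn]] AV by (simp add: A_def)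
    then have "y - V j (A y) \<in> D" unfolding D_def by simp
    then show "(V j \<circ> adj (V j)) y = id y" using D0 by (simp add: A_def)
  qed
  then show "unitary (V j)" using iso[OF jn] by (simp add: unitary_def isometry_def)
qed

end
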